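(* Let $m$ be an even positive integer, $q=2^m$, and let $\{u_1,u_2,u_3,u_4\}$ be a $4$-element subset of $U_{q+1}$. Let $M_4$ be the $4\times4$ matrix whose $j$-th column is $(u_j^{-5},u_j^{-3},u_j^{3},u_j^{5})^T$. Then $\mathrm{rank}(M_4)=3$ if and only if $\sigma_{4,2}^2+\sigma_{4,1}\sigma_{4,3}=0$, where $\sigma_{4,\ell}=\sigma_{4,\ell}(u_1,u_2,u_3,u_4)$.
   Context: $U_{q+1}$ denotes the set of $(q+1)$-th roots of unity in $\mathrm{GF}(q^2)$; ranks are over $\mathrm{GF}(q^2)$. $\sigma_{k,\ell}(u_1,\dots,u_k)=\sum_{I\subseteq\{1,\dots,k\},|I|=\ell}\prod_{j\in I}u_j$ is the elementary symmetric polynomial of degree $\ell$ in $k$ variables. *)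

theory Defs
  imports "Jordan_Normal_Form.DL_Rank"
begin

definition roots_unity :: "nat \<Rightarrow> 'a::field set" where
  "roots_unity n = {x. x ^ n = 1}"

definition esym :: "nat \<Rightarrow> nat \<Rightarrow> (nat \<Rightarrow> 'a::comm_ring_1) \<Rightarrow> 'a" where
  "esym k l u = (\<Sum>I\<in>{I. I \<subseteq> {0..<k} \<and> card I = l}. \<Prod>j\<in>I. u j)"

definition M4 :: "(nat \<Rightarrow> 'a::field) \<Rightarrow> 'a mat" where
  "M4 u = mat 4 4 (\<lambda>(i, j).
     (if i = 0 then inverse (u j) ^ 5 else if i = 1 then inverse (u j) ^ 3
      else if i = 2 then u j ^ 3 else u j ^ 5))"

end

theory Submission
  imports Defs "HOL-Number_Theory.Residues" "HOL-Computational_Algebra.Computational_Algebra"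
begin

lemma esym_0: "esym k 0 u = 1"
proof -
  have "{I. I \<subseteq> {0..<k} \<and> card I = 0} = {{}}"
    using finite_subset by fastforce
  then show ?thesis unfolding esym_def by simp
qed

lemma esym_0_Suc: "esym 0 (Suc l) u = 0"
proof -
  have e: "{I. I \<subseteq> {0..<0::nat} \<and> card I = Suc l} = {}" by auto
  show ?thesis by (simp only: esym_def e sum.empty)
qed

lemma esym_Suc: "esym (Suc k) (Suc l) u = esym k (Suc l) u + u k * esym k l u"
proof -
  let ?A = "{I. I \<subseteq> {0..<k} \<and> card I = Suc l}"
  let ?C = "{I. I \<subseteq> {0..<k} \<and> card I = l}"
  let ?B = "insert k ` ?C"
  have eq: "{I. I \<subseteq> {0..<Suc k} \<and> card I = Suc l} = ?A \<union> ?B"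
  proof (intro equalityI subsetI)
    fix I assume "I \<in> {I. I \<subseteq> {0..<Suc k} \<and> card I = Suc l}"
    then have I: "I \<subseteq> {0..<Suc k}" "card I = Suc l" by auto
    have fI: "finite I" using I(1) finite_subset by blast
    show "I \<in> ?A \<union> ?B"
    proof (cases "k \<in> I")
      case True
      then have "I = insert k (I - {k})" by auto
      moreover have "I - {k} \<in> ?C" using I fI True by auto
      ultimately show ?thesis by blast
    next
      case False
      then have "I \<subseteq> {0..<k}" using I(1) by (auto simp: less_Suc_eq)
      then show ?thesis using I by auto
    qed
  next
    fix I assume "I \<in> ?A \<union> ?B"
    then show "I \<in> {I. I \<subseteq> {0..<Suc k} \<and> card I = Suc l}"
    proof
      assume "I \<in> ?A" then show ?thesis by auto
    next
      assume "I \<in> ?B"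
      then obtain J where J: "J \<in> ?C" "I = insert k J" by blast
      have "finite J" using J(1) finite_subset by blast
      moreover have "k \<notin> J" using J(1) by auto
      ultimately show ?thesis using J by auto
    qed
  qed
  have disj: "?A \<inter> ?B = {}" by auto
  have fin: "finite ?A" "finite ?B"
    by (auto intro: finite_subset[of _ "Pow {0..<k}"] finite_subset[of _ "Pow {0..<Suc k}"])
  have inj: "inj_on (insert k) ?C"
    by (rule inj_onI) (metis (no_types, lifting) atLeastLessThan_iff insert_ident less_irrefl mem_Collect_eq subsetD)
  have "esym (Suc k) (Suc l) u = (\<Sum>I\<in>?A. \<Prod>j\<in>I. u j) + (\<Sum>I\<in>?B. \<Prod>j\<in>I. u j)"
    unfolding esym_def eq by (rule sum.union_disjoint[OF fin disj])
  also have "(\<Sum>I\<in>?B. \<Prod>j\<in>I. u j) = (\<Sum>I\<in>?C. \<Prod>j\<in>insert k I. u j)"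
    by (rule sum.reindex[OF inj, unfolded comp_def])
  also have "\<dots> = (\<Sum>I\<in>?C. u k * (\<Prod>j\<in>I. u j))"
  proof (rule sum.cong[OF refl])
    fix I assume "I \<in> ?C"
    then have "finite I" "k \<notin> I" using finite_subset by auto
    then show "(\<Prod>j\<in>insert k I. u j) = u k * (\<Prod>j\<in>I. u j)" by simp
  qed
  finally show ?thesis unfolding esym_def by (simp add: sum_distrib_left)
qed

lemma esym41: "esym 4 1 u = u 0 + u 1 + u 2 + u 3"
  by (simp add: numeral_eq_Suc esym_Suc esym_0 esym_0_Suc algebra_simps)
lemma esym42: "esym 4 2 u = u 0 * u 1 + u 0 * u 2 + u 0 * u 3 + u 1 * u 2 + u 1 * u 3 + u 2 * u 3"
  by (simp add: numeral_eq_Suc esym_Suc esym_0 esym_0_Suc algebra_simps)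
lemma esym43: "esym 4 3 u = u 0 * u 1 * u 2 + u 0 * u 1 * u 3 + u 0 * u 2 * u 3 + u 1 * u 2 * u 3"
  by (simp add: numeral_eq_Suc esym_Suc esym_0 esym_0_Suc algebra_simps)

lemma det_mat_Suc:
  fixes f :: "nat \<times> nat \<Rightarrow> 'a::comm_ring_1"
  shows "det (mat (Suc k) (Suc k) f) = (\<Sum>j<Suc k. f (0,j) * (-1)^j *
     det (mat k k (\<lambda>(i',j'). f (Suc i', if j' < j then j' else Suc j'))))"
proof -
  have "det (mat (Suc k) (Suc k) f) = (\<Sum>j<Suc k. (mat (Suc k) (Suc k) f) $$ (0,j) * cofactor (mat (Suc k) (Suc k) f) 0 j)"
    by (rule laplace_expansion_row) auto
  also have "\<dots> = (\<Sum>j<Suc k. f (0,j) * (-1)^j *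
     det (mat k k (\<lambda>(i',j'). f (Suc i', if j' < j then j' else Suc j'))))"
  proof (rule sum.cong[OF refl])
    fix j assume j: "j \<in> {..<Suc k}"
    have "mat_delete (mat (Suc k) (Suc k) f) 0 j = mat k k (\<lambda>(i',j'). f (Suc i', if j' < j then j' else Suc j'))"
      unfolding mat_delete_def by (rule eq_matI) auto
    then show "(mat (Suc k) (Suc k) f) $$ (0,j) * cofactor (mat (Suc k) (Suc k) f) 0 j = f (0,j) * (-1)^j *
     det (mat k k (\<lambda>(i',j'). f (Suc i', if j' < j then j' else Suc j')))"
      using j by (simp add: cofactor_def)
  qed
  finally show ?thesis .
qed

lemma det4: fixes f :: "nat \<times> nat \<Rightarrow> 'a::idom"
  shows "det (mat 4 4 f) = 0  + f(0,0)*f(1,1)*f(2,2)*f(3,3) - f(0,0)*f(1,1)*f(2,3)*f(3,2) - f(0,0)*f(1,2)*f(2,1)*f(3,3) + f(0,0)*f(1,2)*f(2,3)*f(3,1) + f(0,0)*f(1,3)*f(2,1)*f(3,2) - f(0,0)*f(1,3)*f(2,2)*f(3,1) - f(0,1)*f(1,0)*f(2,2)*f(3,3) + f(0,1)*f(1,0)*f(2,3)*f(3,2) + f(0,1)*f(1,2)*f(2,0)*f(3,3) - f(0,1)*f(1,2)*f(2,3)*f(3,0) - f(0,1)*f(1,3)*f(2,0)*f(3,2) + f(0,1)*f(1,3)*f(2,2)*f(3,0) + f(0,2)*f(1,0)*f(2,1)*f(3,3) - f(0,2)*f(1,0)*f(2,3)*f(3,1) - f(0,2)*f(1,1)*f(2,0)*f(3,3)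 + f(0,2)*f(1,1)*f(2,3)*f(3,0) + f(0,2)*f(1,3)*f(2,0)*f(3,1) - f(0,2)*f(1,3)*f(2,1)*f(3,0) - f(0,3)*f(1,0)*f(2,1)*f(3,2) + f(0,3)*f(1,0)*f(2,2)*f(3,1) + f(0,3)*f(1,1)*f(2,0)*f(3,2) - f(0,3)*f(1,1)*f(2,2)*f(3,0) - f(0,3)*f(1,2)*f(2,0)*f(3,1) + f(0,3)*f(1,2)*f(2,1)*f(3,0)"
  apply (simp add: numeral_eq_Suc det_mat_Suc det_dim_zero)
  by (simp add: algebra_simps)

lemma det4_scale: fixes g :: "nat \<Rightarrow> nat \<Rightarrow> 'a::idom"
  shows "det (mat 4 4 (\<lambda>(i,j). c j * g i j)) = c 0 * c 1 * c 2 * c 3 * det (mat 4 4 (\<lambda>(i,j). g i j))"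
  by (simp add: det4 algebra_simps)

lemma detx: fixes a b c d :: "'a::idom"
  shows "det (mat 4 4 (\<lambda>(i,j). [a,b,c,d] ! j ^ (if i=0 then 0 else if i=1 then 1 else if i=2 then 4 else 5)))
   = ((b - a)*(c - a)*(d - a)*(c - b)*(d - b)*(d - c)) *
     ((a*b+a*c+a*d+b*c+b*d+c*d)^2 - (a+b+c+d)*(a*b*c+a*b*d+a*c*d+b*c*d))"
  apply (simp add: det4)
  by Groebner_Basis.algebra

lemma frob: fixes p q :: "'a::comm_ring_1" shows "(2::'a) = 0 \<Longrightarrow> (p+q)^2 = p^2 + q^2"
  by (simp add: power2_sum)

lemma neg2: fixes p q :: "'a::comm_ring_1" shows "(2::'a) = 0 \<Longrightarrow> p - q = p + q"
proof -
  assume "(2::'a) = 0"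
  then have "q + q = 0" by (metis mult_2 mult_zero_left)
  then have "p - q = p - q + (q + q)" by simp
  then show ?thesis by (simp add: algebra_simps)
qed

lemma sq_inj2: fixes p q :: "'a::idom"
  assumes two: "(2::'a) = 0" and e: "p^2 = q^2" shows "p = q"
proof -
  have "(p - q)^2 = p^2 + q^2" using frob[OF two] neg2[OF two] by metis
  also have "\<dots> = p^2 - q^2" using neg2[OF two] by metis
  also have "\<dots> = 0" using e by simp
  finally show ?thesis by simp
qed

lemma char2_sq: fixes a b c d :: "'a::idom"
  assumes two: "(2::'a) = 0"
  shows "(a^2*b^2+a^2*c^2+a^2*d^2+b^2*c^2+b^2*d^2+c^2*d^2)^2 - (a^2+b^2+c^2+d^2)*(a^2*b^2*c^2+a^2*b^2*d^2+a^2*c^2*d^2+b^2*c^2*d^2)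
   = ((a*b+a*c+a*d+b*c+b*d+c*d)^2 + (a+b+c+d)*(a*b*c+a*b*d+a*c*d+b*c*d))^2"
proof -
  note f = frob[OF two]
  have s1: "(a+b+c+d)^2 = a^2+b^2+c^2+d^2" by (simp add: f)
  have s2: "(a*b+a*c+a*d+b*c+b*d+c*d)^2 = a^2*b^2+a^2*c^2+a^2*d^2+b^2*c^2+b^2*d^2+c^2*d^2"
    by (simp add: f power_mult_distrib)
  have s3: "(a*b*c+a*b*d+a*c*d+b*c*d)^2 = a^2*b^2*c^2+a^2*b^2*d^2+a^2*c^2*d^2+b^2*c^2*d^2"
    by (simp add: f power_mult_distrib)
  have "((a*b+a*c+a*d+b*c+b*d+c*d)^2 + (a+b+c+d)*(a*b*c+a*b*d+a*c*d+b*c*d))^2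
     = ((a*b+a*c+a*d+b*c+b*d+c*d)^2)^2 + (a+b+c+d)^2*(a*b*c+a*b*d+a*c*d+b*c*d)^2"
    by (simp only: f power_mult_distrib)
  also have "\<dots> = (a^2*b^2+a^2*c^2+a^2*d^2+b^2*c^2+b^2*d^2+c^2*d^2)^2 + (a^2+b^2+c^2+d^2)*(a^2*b^2*c^2+a^2*b^2*d^2+a^2*c^2*d^2+b^2*c^2*d^2)"
    by (simp only: s1 s2 s3)
  finally show ?thesis by (simp only: neg2[OF two])
qed

lemma core3: fixes a0 a1 a2 a b c :: "'a::idom"
  assumes two: "(2::'a) = 0"
   and e0: "a0 + a1 + a2 = 0"
   and e1: "a0 * a + a1 * b + a2 * c = 0"
   and e4: "a0 * a^4 + a1 * b^4 + a2 * c^4 = 0"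
   and e5: "a0 * a^5 + a1 * b^5 + a2 * c^5 = 0"
   and d: "a \<noteq> b" "a \<noteq> c" "b \<noteq> c"
   and nz: "a0 \<noteq> 0 \<or> a1 \<noteq> 0 \<or> a2 \<noteq> 0"
  shows False
proof -
  let ?V = "(b - a)*(c - a)*(c - b)"
  let ?h2 = "a^2 + b^2 + c^2 + a*b + a*c + b*c"
  let ?h3 = "a^3 + b^3 + c^3 + a^2*b + a^2*c + b^2*a + b^2*c + c^2*a + c^2*b + a*b*c"
  have "?V * ?h2 * a0 = 0" "?V * ?h2 * a1 = 0" "?V * ?h2 * a2 = 0"
    using e0 e1 e4 by Groebner_Basis.algebra+
  moreover have "?V * ?h3 * a0 = 0" "?V * ?h3 * a1 = 0" "?V * ?h3 * a2 = 0"
    using e0 e1 e5 by Groebner_Basis.algebra+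
  moreover have V: "?V \<noteq> 0" using d by auto
  ultimately have h: "?h2 = 0" "?h3 = 0" using nz by auto
  have "(b+c)^3 + a * ?h2 + ?h3 = 2 * (0 + c^3 + 2*b*c^2 + 2*b^2*c + b^3 + a*c^2 + a*b*c + a*b^2 + a^2*c + a^2*b + a^3)" by Groebner_Basis.algebra
  then have "(b+c)^3 = 0" using h two by simp
  then have "b + c = 0" by simp
  then have "b - c = 0" using neg2[OF two] by metis
  then show False using d by simp
qed

lemma char_two:
  assumes "card (UNIV :: 'a::{field,finite} set) = (2::nat) ^ k"
  shows "(2::'a) = 0"
proof -
  have pos: "CHAR('a) > 0" by (rule finite_imp_CHAR_pos) simp
  have pr: "prime CHAR('a)" by (rule prime_CHAR_semidom[OF pos])
  have "CHAR('a) dvd 2 ^ k" using CHAR_dvd_CARD[where 'a='a] assms by simp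
  then have "CHAR('a) dvd 2" using prime_dvd_power[OF pr] by blast
  then have "CHAR('a) = 2" using pr primes_dvd_imp_eq[OF pr two_is_prime_nat] by blast
  then have "of_nat 2 = (0::'a)" using of_nat_CHAR[where 'a='a] by simp
  then show ?thesis by simp
qed

lemma ent_lem:
  fixes y :: "'a::field" assumes "y \<noteq> 0"
  shows "inverse y ^ 5 = inverse y ^ 5 * (y^2)^0"
    "inverse y ^ 3 = inverse y ^ 5 * (y^2)^1"
    "y ^ 3 = inverse y ^ 5 * (y^2)^4"
    "y ^ 5 = inverse y ^ 5 * (y^2)^5"
  using assms by (simp_all add: field_simps eval_nat_numeral)

lemma lt4: "j < (4::nat) \<Longrightarrow> j = 0 \<or> j = 1 \<or> j = 2 \<or> j = 3" by auto

lemma nth4: "j < 4 \<Longrightarrow> [f 0, f 1, f 2, f 3] ! j = f j"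
  using lt4[of j] by auto

theorem lemma17:
  fixes u :: "nat \<Rightarrow> 'a::{field, finite}" and m q :: nat
  assumes "even m" and "m > 0" and "q = 2 ^ m"
    and "card (UNIV :: 'a set) = q ^ 2"
    and "inj_on u {0..<4}"
    and "\<forall>j<4. u j \<in> roots_unity (q + 1)"
  shows "vec_space.rank 4 (M4 u) = 3 \<longleftrightarrow>
         (esym 4 2 u) ^ 2 + esym 4 1 u * esym 4 3 u = 0"
proof -
  have "card (UNIV :: 'a set) = (2::nat) ^ (m*2)"
    using assms(3,4) by (simp add: power_mult)
  then have two: "(2::'a) = 0"
    using char_two[where 'a='a] by blast
  have nz: "u j \<noteq> 0" if "j < 4" for j
  proof
    assume "u j = 0"
    moreover have "u j ^ (q+1) = 1" using assms(6) that by (simp add: roots_unity_def)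
    ultimately show False by simp
  qed
  define w where "w = (\<lambda>j. inverse (u j))"
  define x where "x = (\<lambda>j. u j ^ 2)"
  have wnz: "w j \<noteq> 0" if "j < 4" for j using nz[OF that] by (simp add: w_def)
  have xinj: "x i \<noteq> x j" if "i < 4" "j < 4" "i \<noteq> j" for i j
  proof
    assume "x i = x j"
    then have "u i = u j" using sq_inj2[OF two] by (simp add: x_def)
    then show False using assms(5) that by (auto simp: inj_on_def)
  qed
  have MA: "M4 u = mat 4 4 (\<lambda>(i,j). w j ^ 5 * x j ^ (if i=0 then 0 else if i=1 then 1 else if i=2 then 4 else 5))"
    unfolding M4_def
  proof (rule eq_matI)
    fix i j assume "i < dim_row (mat 4 4 (\<lambda>(i,j). w j ^ 5 * x j ^ (if i=0 then 0 else if i=1 then 1 else if i=2 then 4 else 5)))"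
      "j < dim_col (mat 4 4 (\<lambda>(i,j). w j ^ 5 * x j ^ (if i=0 then 0 else if i=1 then 1 else if i=2 then 4 else 5)))"
    then have ij: "i < 4" "j < 4" by auto
    note e = ent_lem[OF nz[OF ij(2)]]
    show "mat 4 4 (\<lambda>(i, j). if i = 0 then inverse (u j) ^ 5 else if i = 1 then inverse (u j) ^ 3
      else if i = 2 then u j ^ 3 else u j ^ 5) $$ (i, j) =
      mat 4 4 (\<lambda>(i,j). w j ^ 5 * x j ^ (if i=0 then 0 else if i=1 then 1 else if i=2 then 4 else 5)) $$ (i, j)"
      using ij lt4[OF ij(1)] e by (auto simp: w_def x_def)
  qed auto
  have MX: "mat 4 4 (\<lambda>(i,j). x j ^ (if i=0 then 0 else if i=1 then 1 else if i=2 then 4 else (5::nat)))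
     = mat 4 4 (\<lambda>(i,j). [x 0, x 1, x 2, x 3] ! j ^ (if i=0 then 0 else if i=1 then 1 else if i=2 then 4 else 5))"
    by (rule eq_matI) (simp_all add: nth4[of _ x, simplified])
  define S where "S = (esym 4 2 u) ^ 2 + esym 4 1 u * esym 4 3 u"
  define V where "V = (x 1 - x 0)*(x 2 - x 0)*(x 3 - x 0)*(x 2 - x 1)*(x 3 - x 1)*(x 3 - x 2)"
  have "x 1 - x 0 \<noteq> 0" "x 2 - x 0 \<noteq> 0" "x 3 - x 0 \<noteq> 0" "x 2 - x 1 \<noteq> 0" "x 3 - x 1 \<noteq> 0" "x 3 - x 2 \<noteq> 0"
    using xinj[of 1 0] xinj[of 2 0] xinj[of 3 0] xinj[of 2 1] xinj[of 3 1] xinj[of 3 2] by auto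
  then have Vnz: "V \<noteq> 0" unfolding V_def by simp
  have detM: "det (M4 u) = (w 0 ^ 5 * w 1 ^ 5 * w 2 ^ 5 * w 3 ^ 5) * (V * S^2)"
  proof -
    have "det (M4 u) = (w 0 ^ 5 * w 1 ^ 5 * w 2 ^ 5 * w 3 ^ 5) *
       det (mat 4 4 (\<lambda>(i,j). x j ^ (if i=0 then 0 else if i=1 then 1 else if i=2 then 4 else (5::nat))))"
      unfolding MA using det4_scale[of "\<lambda>j. w j ^ 5" "\<lambda>i j. x j ^ (if i=0 then 0 else if i=1 then 1 else if i=2 then 4 else (5::nat))"]
      by simp
    also have "det (mat 4 4 (\<lambda>(i,j). x j ^ (if i=0 then 0 else if i=1 then 1 else if i=2 then 4 else (5::nat)))) = V * S^2"
      unfolding MX detx V_def S_def esym41 esym42 esym43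
      using char2_sq[OF two, of "u 0" "u 1" "u 2" "u 3"] by (simp add: x_def)
    finally show ?thesis .
  qed
  have carr: "M4 u \<in> carrier_mat 4 4" by (simp add: M4_def)
  interpret V4: vec_space "TYPE('a)" 4 .
  have det_iff: "det (M4 u) = 0 \<longleftrightarrow> S = 0"
    using detM Vnz wnz by simp
  have le4: "V4.rank (M4 u) \<le> 4" by (rule V4.rank_le_nc[OF carr])
  have rank4: "V4.rank (M4 u) = 4 \<longleftrightarrow> S \<noteq> 0"
    using V4.det_rank_iff[OF carr] det_iff by blast
  have ge3: "3 \<le> V4.rank (M4 u)"
  proof -
    define c where "c = (\<lambda>j. col (M4 u) j)"
    have dims: "dim_row (M4 u) = 4" "dim_col (M4 u) = 4" using carr by auto
    have cent: "c j $ i = w j ^ 5 * x j ^ (if i=0 then 0 else if i=1 then 1 else if i=2 then 4 else (5::nat))"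
      if "i<4" "j<4" for i j
      using that unfolding c_def by (simp add: MA)
    have cvec: "c j \<in> carrier_vec 4" for j unfolding c_def by (metis col_dim dims(1))
    have xc: "x j = c j $ 3 * c j $ 1" if "j<4" for j
    proof -
      have "c j $ 3 = u j ^ 5" "c j $ 1 = inverse (u j) ^ 3"
        using that dims unfolding c_def by (simp_all add: M4_def)
      then show ?thesis using nz[OF that] by (simp add: x_def field_simps eval_nat_numeral)
    qed
    have cinj: "c i \<noteq> c j" if "i<4" "j<4" "i\<noteq>j" for i j
      using xc[OF that(1)] xc[OF that(2)] xinj[OF that] by metis
    have distc: "distinct [c 0, c 1, c 2]" using cinj by auto
    define U where "U = {c 0, c 1, c 2}"
    have cardU: "card U = 3" unfolding U_def using cinj by auto
    have Usub: "U \<subseteq> set (cols (M4 u))"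
      unfolding U_def c_def cols_def using dims by auto
    have lin: "\<not> V4.lin_dep U"
    proof
      assume dep: "V4.lin_dep U"
      let ?B = "mat_of_cols 4 [c 0, c 1, c 2]"
      have colsB: "cols ?B = [c 0, c 1, c 2]" using cvec by simp
      have Bc: "?B \<in> carrier_mat 4 3" using mat_of_cols_carrier(1)[of 4 "[c 0, c 1, c 2]"] by (simp add: numeral_3_eq_3)
      have "V4.lin_dep (set (cols ?B))" using dep colsB unfolding U_def by simp
      then obtain v where v: "v \<in> carrier_vec 3" "v \<noteq> 0\<^sub>v 3" "?B *\<^sub>v v = 0\<^sub>v 4"
        using V4.lin_depE[OF Bc] distc colsB by metis
      have eq: "c 0 $ i * v $ 0 + c 1 $ i * v $ 1 + c 2 $ i * v $ 2 = 0" if "i<4" for i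
      proof -
        have "(?B *\<^sub>v v) $ i = 0" using v(3) that by simp
        moreover have "(?B *\<^sub>v v) $ i = c 0 $ i * v $ 0 + c 1 $ i * v $ 1 + c 2 $ i * v $ 2"
          using that v(1) by (simp add: scalar_prod_def mat_of_cols_index numeral_3_eq_3 numeral_2_eq_2 atLeast0LessThan lessThan_Suc)
        ultimately show ?thesis by simp
      qed
      define a where "a = (\<lambda>j. v $ j * w j ^ 5)"
      have E: "a 0 * x 0 ^ e + a 1 * x 1 ^ e + a 2 * x 2 ^ e = 0"
        if "i < 4" "e = (if i=0 then 0 else if i=1 then 1 else if i=2 then 4 else (5::nat))" for i :: nat and e
        using eq[OF that(1)] cent[OF that(1)] that(2) unfolding a_def by (simp add: algebra_simps)
      have e0: "a 0 + a 1 + a 2 = 0" using E[of 0 0] by simp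
      have e1: "a 0 * x 0 + a 1 * x 1 + a 2 * x 2 = 0" using E[of 1 1] by simp
      have e4: "a 0 * x 0^4 + a 1 * x 1^4 + a 2 * x 2^4 = 0" using E[of 2 4] by simp
      have e5: "a 0 * x 0^5 + a 1 * x 1^5 + a 2 * x 2^5 = 0" using E[of 3 5] by simp
      have "\<exists>j<3. v $ j \<noteq> 0"
      proof (rule ccontr)
        assume "\<not> (\<exists>j<3. v $ j \<noteq> 0)"
        then have "v = 0\<^sub>v 3" using v(1) by (intro eq_vecI) auto
        then show False using v(2) by simp
      qed
      then obtain j where j: "j < 3" "v $ j \<noteq> 0" by blast
      have "a j \<noteq> 0" using j wnz[of j] unfolding a_def by simp
      then have nza: "a 0 \<noteq> 0 \<or> a 1 \<noteq> 0 \<or> a 2 \<noteq> 0" using j(1) lt4[of j] by auto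
      show False
        using core3[OF two e0 e1 e4 e5 xinj[of 0 1] xinj[of 0 2] xinj[of 1 2] nza] by simp
    qed
    show ?thesis using V4.rank_ge_card_indpt[OF carr Usub lin] cardU by simp
  qed
  show ?thesis unfolding S_def[symmetric] using le4 rank4 ge3 by linarith
qed

end
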